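(* Let $H(x,p)=\frac12\left(H_{11}p^2+2H_{12}px+H_{22}x^2\right)$ with real coefficients satisfying $H_{11}H_{22}-H_{12}^2=-\alpha^2$, $\alpha>0$. For $t\in\mathbb R$ and $\tau=it$, let $\mathcal P_\tau=\exp(\tau\mathcal L_{X_H})\mathcal P_{Sch}$ be the complex line field on $\mathbb R^2$ spanned by $X_{w_\tau}$, where $$w_\tau=\exp(\tau X_H)(x)=\left(\cos(\alpha t)+iH_{12}\frac{\sin(\alpha t)}{\alpha}\right)x+iH_{11}\frac{\sin(\alpha t)}{\alpha}\,p .$$ Then $\mathcal P_\tau$ is: (a) anti-Kähler if $H_{11}\sin(2\alpha t)<0$; (b) the Schrödinger polarization if $H_{11}\sin(\alpha t)=0$; (c) Kähler if $H_{11}\sin(2\alpha t)>0$; (d) the real polarization $\langle X_{H_{12}x+H_{11}p}\rangle_{\mathbb C}$ if $H_{11}\cos(\alpha t)=0$.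
   Context: Work on $\mathbb R^2$ with coordinates $(x,p)$ and symplectic form $\omega=dx\wedge dp$. The Hamiltonian vector field of a function $f$ is $X_f=\frac{\partial f}{\partial p}\frac{\partial}{\partial x}-\frac{\partial f}{\partial x}\frac{\partial}{\partial p}$. For real $t$, $\exp(tX_H)(x)$ denotes the function $x\circ\phi_t$ where $\phi_t$ is the time-$t$ flow of $X_H$; $\exp(\tau X_H)(x)$ for $\tau=it$ is its analytic continuation in $t$, which gives the displayed formula for $w_\tau$. The Schrödinger (vertical) polarization is $\mathcal P_{Sch}=\langle X_x\rangle_{\mathbb C}=\langle\partial/\partial p\rangle_{\mathbb C}$, and $\mathcal P_\tau=\langle X_{w_\tau}\rangle_{\mathbb C}$. For a complex linear function $w$ on $\mathbb R^2$ write $\frac{i}{2}dw\wedge d\bar w=c\,\omega$; the polarization $\langle X_w\rangle_{\mathbb C}$ is called Kähler if $c>0$ (it is then $T^{(0,1)}$ of a complex structure $J$ for which $(\mathbb R^2,\omega,J)$ is Kähler, $w$ being $J$-holomorphic), anti-Kähler if $c<0$, and real if $c=0$. *)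

theory Defs
  imports "HOL-Analysis.Analysis"
begin

text \<open>Points of R^2 are pairs (x,p); symplectic form omega = dx /\ dp.
  Complex-valued functions f on R^2; partial derivatives taken along the coordinate lines.\<close>

definition partial_x :: "(real \<times> real \<Rightarrow> complex) \<Rightarrow> real \<times> real \<Rightarrow> complex" where
  "partial_x f z = vector_derivative (\<lambda>s. f (fst z + s, snd z)) (at 0)"

definition partial_p :: "(real \<times> real \<Rightarrow> complex) \<Rightarrow> real \<times> real \<Rightarrow> complex" where
  "partial_p f z = vector_derivative (\<lambda>s. f (fst z, snd z + s)) (at 0)"

text \<open>Hamiltonian vector field X_f = f_p d/dx - f_x d/dp, as a complexified tangent vector
  (d/dx-component, d/dp-component).\<close>
definition ham_vf :: "(real \<times> real \<Rightarrow> complex) \<Rightarrow> real \<times> real \<Rightarrow> complex \<times> complex" where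
  "ham_vf f z = (partial_p f z, - partial_x f z)"

definition pol :: "(real \<times> real \<Rightarrow> complex) \<Rightarrow> real \<times> real \<Rightarrow> (complex \<times> complex) set" where
  "pol f z = {(c * fst (ham_vf f z), c * snd (ham_vf f z)) | c. True}"

definition P_Sch :: "real \<times> real \<Rightarrow> (complex \<times> complex) set" where
  "P_Sch = pol (\<lambda>z. complex_of_real (fst z))"

text \<open>The coefficient c in (i/2) dw /\ dwbar = c omega, at the point z:
  (dw /\ dwbar)(d/dx, d/dp) = w_x conj(w_p) - w_p conj(w_x).\<close>
definition kahler_coeff :: "(real \<times> real \<Rightarrow> complex) \<Rightarrow> real \<times> real \<Rightarrow> complex" where
  "kahler_coeff w z = (\<i> / 2) * (partial_x w z * cnj (partial_p w z) - partial_p w z * cnj (partial_x w z))"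

definition is_kahler :: "(real \<times> real \<Rightarrow> complex) \<Rightarrow> bool" where
  "is_kahler w \<longleftrightarrow> (\<forall>z. kahler_coeff w z \<in> \<real> \<and> Re (kahler_coeff w z) > 0)"

definition is_anti_kahler :: "(real \<times> real \<Rightarrow> complex) \<Rightarrow> bool" where
  "is_anti_kahler w \<longleftrightarrow> (\<forall>z. kahler_coeff w z \<in> \<real> \<and> Re (kahler_coeff w z) < 0)"

definition is_real_pol :: "(real \<times> real \<Rightarrow> complex) \<Rightarrow> bool" where
  "is_real_pol w \<longleftrightarrow> (\<forall>z. kahler_coeff w z = 0)"

text \<open>w_tau = exp(tau X_H)(x) for tau = i t, as given by the displayed formula.\<close>
definition w_tau :: "real \<Rightarrow> real \<Rightarrow> real \<Rightarrow> real \<Rightarrow> real \<times> real \<Rightarrow> complex" where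
  "w_tau H11 H12 \<alpha> t z =
     (complex_of_real (cos (\<alpha> * t)) + \<i> * complex_of_real (H12 * sin (\<alpha> * t) / \<alpha>)) * complex_of_real (fst z)
     + \<i> * complex_of_real (H11 * sin (\<alpha> * t) / \<alpha>) * complex_of_real (snd z)"

end

theory Submission
  imports Defs
begin

lemma lin_form: "w_tau H11 H12 \<alpha> t = (\<lambda>z. (complex_of_real (cos (\<alpha> * t)) + \<i> * complex_of_real (H12 * sin (\<alpha> * t) / \<alpha>)) * complex_of_real (fst z)
     + (\<i> * complex_of_real (H11 * sin (\<alpha> * t) / \<alpha>)) * complex_of_real (snd z))"
  by (rule ext) (simp add: w_tau_def)

lemma px_lin: "partial_x (\<lambda>z. A * complex_of_real (fst z) + B * complex_of_real (snd z)) z = A"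
proof -
  have "((\<lambda>s. A * complex_of_real (fst z + s) + B * complex_of_real (snd z)) has_vector_derivative A) (at 0)"
    using has_vector_derivative_def
    by (rule_tac has_vector_derivative_eq_rhs, unfold has_vector_derivative_def, intro derivative_eq_intros)
       (auto simp: has_vector_derivative_def scaleR_conv_of_real fun_eq_iff)
  then show ?thesis unfolding partial_x_def by (simp add: vector_derivative_at)
qed

lemma pp_lin: "partial_p (\<lambda>z. A * complex_of_real (fst z) + B * complex_of_real (snd z)) z = B"
proof -
  have "((\<lambda>s. A * complex_of_real (fst z) + B * complex_of_real (snd z + s)) has_vector_derivative B) (at 0)"
    using has_vector_derivative_def
    by (rule_tac has_vector_derivative_eq_rhs, unfold has_vector_derivative_def, intro derivative_eq_intros)
       (auto simp: has_vector_derivative_def scaleR_conv_of_real fun_eq_iff)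
  then show ?thesis unfolding partial_p_def by (simp add: vector_derivative_at)
qed

lemma x_lin: "(\<lambda>z. complex_of_real (fst z)) = (\<lambda>z. 1 * complex_of_real (fst z) + 0 * complex_of_real (snd z))"
  by simp

lemma h_lin: "(\<lambda>z. complex_of_real (H12 * fst z + H11 * snd z)) = (\<lambda>z. complex_of_real H12 * complex_of_real (fst z) + complex_of_real H11 * complex_of_real (snd z))"
  by simp

lemma pol_lin: "pol (\<lambda>z. A * complex_of_real (fst z) + B * complex_of_real (snd z)) z = {(c * B, c * (- A)) | c. True}"
  by (simp add: pol_def ham_vf_def px_lin pp_lin)

lemma kc_lin: "kahler_coeff (\<lambda>z. A * complex_of_real (fst z) + B * complex_of_real (snd z)) z
   = (\<i> / 2) * (A * cnj B - B * cnj A)"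
  by (simp add: kahler_coeff_def px_lin pp_lin)

lemma span_eq:
  fixes k A B A' B' :: complex
  assumes "k \<noteq> 0" "B = k * B'" "A = k * A'"
  shows "{(c * B, c * (- A)) | c. True} = {(c * B', c * (- A')) | c. True}"
proof (rule set_eqI, rule iffI)
  fix v assume "v \<in> {(c * B, c * (- A)) | c. True}"
  then obtain c where "v = (c * B, c * (- A))" by blast
  then show "v \<in> {(c * B', c * (- A')) | c. True}" using assms
    by (intro CollectI exI[of _ "c * k"]) (simp add: mult_ac)
next
  fix v assume "v \<in> {(c * B', c * (- A')) | c. True}"
  then obtain c where "v = (c * B', c * (- A'))" by blast
  then show "v \<in> {(c * B, c * (- A)) | c. True}" using assms
    by (intro CollectI exI[of _ "c / k"]) (simp add: field_simps)
qed

theorem proposition3p1: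
  fixes H11 H12 H22 \<alpha> t :: real
  assumes "H11 * H22 - H12 ^ 2 = - (\<alpha> ^ 2)" and "\<alpha> > 0"
  shows "(H11 * sin (2 * \<alpha> * t) < 0 \<longrightarrow> is_anti_kahler (w_tau H11 H12 \<alpha> t))
       \<and> (H11 * sin (\<alpha> * t) = 0 \<longrightarrow> pol (w_tau H11 H12 \<alpha> t) = P_Sch)
       \<and> (H11 * sin (2 * \<alpha> * t) > 0 \<longrightarrow> is_kahler (w_tau H11 H12 \<alpha> t))
       \<and> (H11 * cos (\<alpha> * t) = 0 \<longrightarrow>
            is_real_pol (w_tau H11 H12 \<alpha> t) \<and>
            pol (w_tau H11 H12 \<alpha> t) =
              pol (\<lambda>z. complex_of_real (H12 * fst z + H11 * snd z)))"
proof -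
  define s where "s = sin (\<alpha> * t)"
  define c where "c = cos (\<alpha> * t)"
  have sc: "s^2 + c^2 = 1" unfolding s_def c_def by simp
  have s2: "sin (2 * \<alpha> * t) = 2 * s * c" unfolding s_def c_def
    using sin_double[of "\<alpha> * t"] by (simp add: mult.assoc)
  define A where "A = complex_of_real c + \<i> * complex_of_real (H12 * s / \<alpha>)"
  define B where "B = \<i> * complex_of_real (H11 * s / \<alpha>)"
  have W: "w_tau H11 H12 \<alpha> t = (\<lambda>z. A * complex_of_real (fst z) + B * complex_of_real (snd z))"
    unfolding lin_form A_def B_def s_def c_def ..
  have KC: "kahler_coeff (w_tau H11 H12 \<alpha> t) z = complex_of_real (H11 * s * c / \<alpha>)" for z
    unfolding W kc_lin A_def B_def
    by (simp add: complex_eq_iff algebra_simps)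
  have pos: "H11 * sin (2 * \<alpha> * t) > 0 \<longleftrightarrow> H11 * s * c / \<alpha> > 0"
    using assms(2) s2 by (simp add: zero_less_divide_iff mult_ac)
  have neg: "H11 * sin (2 * \<alpha> * t) < 0 \<longleftrightarrow> H11 * s * c / \<alpha> < 0"
    using assms(2) s2 by (simp add: divide_less_0_iff mult_ac)
  have H12nz: "H12 \<noteq> 0" if "H11 = 0"
    using assms that by auto
  have b: "pol (w_tau H11 H12 \<alpha> t) = P_Sch" if h: "H11 * s = 0"
  proof -
    have B0: "B = 0" using h by (simp add: B_def)
    have Anz: "A \<noteq> 0"
    proof
      assume "A = 0"
      then have c0: "c = 0" and "H12 * s / \<alpha> = 0" by (simp_all add: A_def complex_eq_iff)
      then have "s \<noteq> 0" using sc by auto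
      then have "H11 = 0" using h by simp
      then show False using H12nz \<open>H12 * s / \<alpha> = 0\<close> \<open>s \<noteq> 0\<close> assms(2) by simp
    qed
    show ?thesis
      unfolding W P_Sch_def x_lin
      by (rule ext, simp only: pol_lin, rule span_eq[of A]) (use Anz B0 in simp_all)
  qed
  have d: "pol (w_tau H11 H12 \<alpha> t) = pol (\<lambda>z. complex_of_real (H12 * fst z + H11 * snd z))"
    if h: "H11 * c = 0"
  proof (cases "H11 = 0")
    case True
    have Anz: "A \<noteq> 0"
    proof
      assume "A = 0"
      then have c0: "c = 0" and "H12 * s / \<alpha> = 0" by (simp_all add: A_def complex_eq_iff)
      then have "s \<noteq> 0" using sc by auto
      then show False using H12nz[OF True] \<open>H12 * s / \<alpha> = 0\<close> assms(2) by simp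
    qed
    show ?thesis unfolding W h_lin
      by (rule ext, simp only: pol_lin, rule span_eq[of "A / complex_of_real H12"])
         (use Anz True H12nz in \<open>simp_all add: B_def\<close>)
  next
    case False
    then have c0: "c = 0" using h by simp
    then have snz: "s \<noteq> 0" using sc by auto
    show ?thesis unfolding W h_lin
      by (rule ext, simp only: pol_lin, rule span_eq[of "\<i> * complex_of_real (s / \<alpha>)"])
         (use snz c0 assms(2) in \<open>simp_all add: A_def B_def\<close>)
  qed
  show ?thesis
    unfolding is_kahler_def is_anti_kahler_def is_real_pol_def KC
    using pos neg b d by (simp add: s_def c_def)
qed

end
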